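(* Let $n\ge 4$ and $r_1\ge r_2\ge\cdots\ge r_n>0$. If $r_4+\cdots+r_n<r_3$, then there exists a homothetic packing of $n$ cubes with radii $r_1,\ldots,r_n$ and at least $4n-11$ face-to-face contacts (and hence more than $3n-3$ face-to-face contacts when $n\ge 9$).
   Context: Let $C=\{(x,y,z):-1\le x,y,z\le 1\}\subset\mathbb{R}^3$. A homothetic cube packing with radii $r_1,\ldots,r_n$ is a set $\{C_1,\ldots,C_n\}$ with $C_i=r_iC+p_i$, $p_i\in\mathbb{R}^3$, whose interiors are pairwise disjoint. A face-to-face contact is an unordered pair $\{i,j\}$, $i\ne j$, such that $C_i\cap C_j$ is a $2$-dimensional convex set. *)

theory Defs
  imports "HOL-Analysis.Analysis"
begin

definition std_cube :: "(real^3) set" where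
  "std_cube = cbox (\<chi> i. -1) (\<chi> i. 1)"

definition hcube :: "real \<Rightarrow> real^3 \<Rightarrow> (real^3) set" where
  "hcube r p = (\<lambda>x. p + r *\<^sub>R x) ` std_cube"

definition homothetic_cube_packing :: "nat \<Rightarrow> (nat \<Rightarrow> real) \<Rightarrow> (nat \<Rightarrow> real^3) \<Rightarrow> bool" where
  "homothetic_cube_packing n r p \<longleftrightarrow>
     (\<forall>i\<in>{1..n}. \<forall>j\<in>{1..n}. i \<noteq> j \<longrightarrow>
        interior (hcube (r i) (p i)) \<inter> interior (hcube (r j) (p j)) = {})"

definition face_contact :: "(real^3) set \<Rightarrow> (real^3) set \<Rightarrow> bool" where
  "face_contact A B \<longleftrightarrow> convex (A \<inter> B) \<and> aff_dim (A \<inter> B) = 2"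

definition face_contacts :: "nat \<Rightarrow> (nat \<Rightarrow> real) \<Rightarrow> (nat \<Rightarrow> real^3) \<Rightarrow> nat set set" where
  "face_contacts n r p =
     {{i, j} | i j. i \<in> {1..n} \<and> j \<in> {1..n} \<and> i \<noteq> j \<and>
        face_contact (hcube (r i) (p i)) (hcube (r j) (p j))}"

end

theory Submission imports Defs begin

lemma hcube_cart:
  assumes "r > 0"
  shows "hcube r p = cbox (\<chi> i. p$i - r) (\<chi> i. p$i + r)"
proof -
  have e: "(\<lambda>x. p + r *\<^sub>R x) = (\<lambda>x. r *\<^sub>R x + p)" by (auto simp: add.commute)
  have ne: "cbox (\<chi> i. -1) (\<chi> i. 1) \<noteq> ({} :: (real^3) set)"
    by (auto simp: interval_eq_empty_cart)
  show ?thesis unfolding hcube_def std_cube_def e image_affinity_cbox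
    using ne assms by (auto simp: vec_eq_iff intro!: arg_cong2[where f=cbox])
qed

lemma aff_dim2:
  fixes u v :: "real^3"
  assumes k: "u$k = v$k" and o: "\<And>i. i \<noteq> k \<Longrightarrow> u$i < v$i"
  shows "aff_dim (cbox u v) = 2"
proof -
  have up: "aff_dim (cbox u v) \<le> 2"
  proof -
    have "cbox u v \<subseteq> {x. axis k 1 \<bullet> x = u$k}"
    proof
      fix x assume "x \<in> cbox u v"
      then have "u$k \<le> x$k" "x$k \<le> v$k" by (auto simp: mem_box_cart)
      then show "x \<in> {x. axis k 1 \<bullet> x = u$k}" using k by (simp add: inner_axis')
    qed
    moreover have "aff_dim {x. axis k (1::real) \<bullet> x = u$k} = 2"
      by (subst aff_dim_hyperplane) (auto simp: axis_eq_0_iff)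
    ultimately show ?thesis by (metis aff_dim_subset)
  qed
  obtain i j :: 3 where ij: "i \<noteq> k" "j \<noteq> k" "i \<noteq> j"
  proof -
    have d: "(1::3) \<noteq> 2" "(1::3) \<noteq> 3" "(2::3) \<noteq> 3" by simp_all
    consider "k=1" | "k=2" | "k=3" using exhaust_3 by blast
    then show ?thesis
    proof cases
      case 1 then show ?thesis using that[of 2 3] d by metis
    next
      case 2 then show ?thesis using that[of 1 3] d by metis
    next
      case 3 then show ?thesis using that[of 1 2] d by metis
    qed
  qed
  define s where "s = v$i - u$i"
  define t where "t = v$j - u$j"
  have sp: "s > 0" "t > 0" using o ij unfolding s_def t_def by auto
  define T where "T = {0, s *\<^sub>R axis i (1::real), t *\<^sub>R axis j 1}"
  have uv: "\<And>i. u$i \<le> v$i" using o k by (metis order.strict_implies_order order_refl)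
  have sub: "(+) u ` T \<subseteq> cbox u v"
    unfolding T_def using sp ij uv
    by (auto simp: mem_box_cart axis_def s_def t_def less_imp_le)
  have ind: "independent {s *\<^sub>R axis i (1::real), t *\<^sub>R axis j 1}"
    apply (rule pairwise_orthogonal_independent)
    using sp ij by (auto simp: pairwise_def orthogonal_def inner_axis_axis axis_eq_0_iff)
  have neq: "s *\<^sub>R axis i (1::real) \<noteq> t *\<^sub>R axis j 1"
    using sp ij by (auto simp: axis_def vec_eq_iff)
  have "dim T = 2"
  proof -
    have "dim T = dim {s *\<^sub>R axis i (1::real), t *\<^sub>R axis j 1}"
      unfolding T_def by (metis dim_span span_insert_0)
    also have "\<dots> = 2" using dim_eq_card_independent[OF ind] neq by simp
    finally show ?thesis .
  qed
  then have "aff_dim T = 2"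
    using aff_dim_eq_dim[of 0 T] by (simp add: T_def hull_inc)
  then have "aff_dim ((+) u ` T) = 2" by (simp add: aff_dim_translation_eq)
  then have "aff_dim (cbox u v) \<ge> 2" using aff_dim_subset[OF sub] by simp
  with up show ?thesis by simp
qed

lemma cube_disj:
  assumes "r > 0" "s > 0" "\<exists>l. p$l + r \<le> q$l - s \<or> q$l + s \<le> p$l - r"
  shows "interior (hcube r p) \<inter> interior (hcube s q) = {}"
proof -
  obtain l where l: "p$l + r \<le> q$l - s \<or> q$l + s \<le> p$l - r" using assms(3) by blast
  show ?thesis
    unfolding hcube_cart[OF assms(1)] hcube_cart[OF assms(2)] interior_cbox
  proof (rule ccontr)
    assume "box (\<chi> i. p$i - r) (\<chi> i. p$i + r) \<inter> box (\<chi> i. q$i - s) (\<chi> i. q$i + s) \<noteq> {}"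
    then obtain x where "x \<in> box (\<chi> i. p$i - r) (\<chi> i. p$i + r)" "x \<in> box (\<chi> i. q$i - s) (\<chi> i. q$i + s)" by blast
    then have "p$l - r < x$l" "x$l < p$l + r" "q$l - s < x$l" "x$l < q$l + s"
      by (auto simp: mem_box_cart)
    with l show False by linarith
  qed
qed

lemma cube_contact:
  assumes "r > 0" "s > 0" and k: "max (p$k - r) (q$k - s) = min (p$k + r) (q$k + s)"
    and o: "\<And>i. i \<noteq> k \<Longrightarrow> max (p$i - r) (q$i - s) < min (p$i + r) (q$i + s)"
  shows "face_contact (hcube r p) (hcube s q)"
proof -
  have "hcube r p \<inter> hcube s q = cbox (\<chi> i. max (p$i - r) (q$i - s)) (\<chi> i. min (p$i + r) (q$i + s))"
    unfolding hcube_cart[OF assms(1)] hcube_cart[OF assms(2)] by (auto simp: mem_box_cart set_eq_iff)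
  moreover have "aff_dim (cbox (\<chi> i. max (p$i - r) (q$i - s)) (\<chi> i. min (p$i + r) (q$i + s))) = 2"
    by (rule aff_dim2[where k=k]) (use k o in auto)
  ultimately show ?thesis unfolding face_contact_def
    using convex_Int convex_box hcube_cart assms(1,2) by metis
qed

lemma cube_contact1:
  assumes "r > 0" "s > 0" "max (p$1 - r) (q$1 - s) = min (p$1 + r) (q$1 + s)"
    "max (p$2 - r) (q$2 - s) < min (p$2 + r) (q$2 + s)"
    "max (p$3 - r) (q$3 - s) < min (p$3 + r) (q$3 + s)"
  shows "face_contact (hcube r p) (hcube s q)"
  proof (rule cube_contact[where k=1], rule assms(1), rule assms(2), rule assms(3))
  fix i :: 3 assume "i \<noteq> 1"
  then have "i = 2 \<or> i = 3" using exhaust_3[of i] by blast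
  then show "max (p$i - r) (q$i - s) < min (p$i + r) (q$i + s)" using assms(4,5) by blast
qed

lemma cube_contact2:
  assumes "r > 0" "s > 0" "max (p$2 - r) (q$2 - s) = min (p$2 + r) (q$2 + s)"
    "max (p$1 - r) (q$1 - s) < min (p$1 + r) (q$1 + s)"
    "max (p$3 - r) (q$3 - s) < min (p$3 + r) (q$3 + s)"
  shows "face_contact (hcube r p) (hcube s q)"
  proof (rule cube_contact[where k=2], rule assms(1), rule assms(2), rule assms(3))
  fix i :: 3 assume "i \<noteq> 2"
  then have "i = 1 \<or> i = 3" using exhaust_3[of i] by blast
  then show "max (p$i - r) (q$i - s) < min (p$i + r) (q$i + s)" using assms(4,5) by blast
qed

lemma cube_contact3:
  assumes "r > 0" "s > 0" "max (p$3 - r) (q$3 - s) = min (p$3 + r) (q$3 + s)"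
    "max (p$1 - r) (q$1 - s) < min (p$1 + r) (q$1 + s)"
    "max (p$2 - r) (q$2 - s) < min (p$2 + r) (q$2 + s)"
  shows "face_contact (hcube r p) (hcube s q)"
  proof (rule cube_contact[where k=3], rule assms(1), rule assms(2), rule assms(3))
  fix i :: 3 assume "i \<noteq> 3"
  then have "i = 1 \<or> i = 2" using exhaust_3[of i] by blast
  then show "max (p$i - r) (q$i - s) < min (p$i + r) (q$i + s)" using assms(4,5) by blast
qed

theorem proposition25:
  fixes n :: nat and r :: "nat \<Rightarrow> real"
  assumes "n \<ge> 4"
    and "\<And>i j. 1 \<le> i \<Longrightarrow> i \<le> j \<Longrightarrow> j \<le> n \<Longrightarrow> r j \<le> r i"
    and "\<And>i. 1 \<le> i \<Longrightarrow> i \<le> n \<Longrightarrow> r i > 0"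
    and "(\<Sum>i = 4..n. r i) < r 3"
  shows "\<exists>p :: nat \<Rightarrow> real^3. homothetic_cube_packing n r p
           \<and> card (face_contacts n r p) \<ge> 4 * n - 11
           \<and> (n \<ge> 9 \<longrightarrow> card (face_contacts n r p) > 3 * n - 3)"
proof -
  note n4 = assms(1)
  have rpos: "\<And>i. 1 \<le> i \<Longrightarrow> i \<le> n \<Longrightarrow> r i > 0" by (rule assms(3))
  have r12: "r 2 \<le> r 1" "r 3 \<le> r 2" using assms(2) n4 by auto
  have r1p: "r 1 > 0" "r 2 > 0" "r 3 > 0" using rpos n4 by auto
  have rk3: "\<And>k. 4 \<le> k \<Longrightarrow> k \<le> n \<Longrightarrow> r k \<le> r 3" using assms(2) by auto
  define c where "c = r n"
  have cle: "\<And>k. 1 \<le> k \<Longrightarrow> k \<le> n \<Longrightarrow> c \<le> r k" unfolding c_def using assms(2) by auto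
  have cpos: "c > 0" unfolding c_def using rpos n4 by auto
  define S where "S k = sum r {4..<k}" for k
  have S0: "\<And>k. k \<le> Suc n \<Longrightarrow> S k \<ge> 0"
    unfolding S_def by (rule sum_nonneg) (use rpos in \<open>auto intro: less_imp_le\<close>)
  have Ssuc: "\<And>k. 4 \<le> k \<Longrightarrow> S (Suc k) = S k + r k"
    unfolding S_def by simp
  have Smono: "\<And>k j. k \<le> j \<Longrightarrow> j \<le> Suc n \<Longrightarrow> S k \<le> S j"
    unfolding S_def by (rule sum_mono2) (use rpos in \<open>auto intro: less_imp_le\<close>)
  have Stot: "S (Suc n) < r 3"
    unfolding S_def using assms(4) by (simp add: atLeastLessThanSuc_atLeastAtMost)
  have Sb: "\<And>k. 4 \<le> k \<Longrightarrow> k \<le> n \<Longrightarrow> S k + r k < r 3"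
  proof -
    fix k assume "4 \<le> k" "k \<le> n"
    then have "S k + r k = S (Suc k)" using Ssuc by simp
    also have "\<dots> \<le> S (Suc n)" using Smono \<open>k \<le> n\<close> by simp
    finally show "S k + r k < r 3" using Stot by simp
  qed
  define X where "X k = (if k = 1 then - r 1 else if k = 2 then r 2 else if k = 3 then c + r 3 else c - r k)" for k
  define Y where "Y k = (if k = 1 then r 1 else if k = 2 then r 2 else if k = 3 then r 3 else 2 * S k + r k)" for k
  define Z where "Z k = (if k = 1 then - r 1 else if k = 2 then - r 2 else if k = 3 then r 3 else r k)" for k
  define p where "p k = (vector [X k, Y k, Z k] :: real^3)" for k
  have pc: "p k $ 1 = X k" "p k $ 2 = Y k" "p k $ 3 = Z k" for k by (simp_all add: p_def)
  have sep: "\<exists>l. p i $ l + r i \<le> p j $ l - r j \<or> p j $ l + r j \<le> p i $ l - r i"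
    if ij: "1 \<le> i" "i < j" "j \<le> n" for i j
  proof -
    consider "i = 1" "j = 2" | "i = 1" "j = 3" | "i = 1" "j \<ge> 4" | "i = 2" "j = 3" | "i = 2" "j \<ge> 4"
      | "i = 3" "j \<ge> 4" | "i \<ge> 4" using ij by linarith
    then show ?thesis
    proof cases
      case 1 then show ?thesis by (intro exI[of _ 1]) (simp add: pc X_def)
    next
      case 2 then show ?thesis using cpos by (intro exI[of _ 1]) (simp add: pc X_def)
    next
      case 3 then show ?thesis by (intro exI[of _ 3]) (simp add: pc Z_def)
    next
      case 4 then show ?thesis by (intro exI[of _ 3]) (simp add: pc Z_def)
    next
      case 5 then show ?thesis by (intro exI[of _ 3]) (simp add: pc Z_def)
    next
      case 6 then show ?thesis by (intro exI[of _ 1]) (simp add: pc X_def)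
    next
      case 7
      have "S i + r i = S (Suc i)" using Ssuc 7 by simp
      also have "\<dots> \<le> S j" using Smono ij by simp
      finally have "Y i + r i \<le> Y j - r j" using 7 ij by (simp add: Y_def)
      then show ?thesis by (intro exI[of _ 2]) (simp add: pc)
    qed
  qed
  have pack: "homothetic_cube_packing n r p"
    unfolding homothetic_cube_packing_def
  proof (intro ballI impI)
    fix i j assume i: "i \<in> {1..n}" and j: "j \<in> {1..n}" and "i \<noteq> j"
    then consider "i < j" | "j < i" by linarith
    then show "interior (hcube (r i) (p i)) \<inter> interior (hcube (r j) (p j)) = {}"
    proof cases
      case 1 then show ?thesis using sep[of i j] i j rpos by (intro cube_disj) auto
    next
      case 2 then have "interior (hcube (r j) (p j)) \<inter> interior (hcube (r i) (p i)) = {}"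
        using sep[of j i] i j rpos by (intro cube_disj) auto
      then show ?thesis by blast
    qed
  qed
  have mem: "{i, j} \<in> face_contacts n r p"
    if "i \<in> {1..n}" "j \<in> {1..n}" "i \<noteq> j" "face_contact (hcube (r i) (p i)) (hcube (r j) (p j))" for i j
    unfolding face_contacts_def using that by blast
  have fin: "finite (face_contacts n r p)"
  proof (rule finite_subset)
    show "face_contacts n r p \<subseteq> Pow {1..n}" unfolding face_contacts_def by auto
  qed auto
  define A0 :: "nat set set" where "A0 = {{1,2},{2,3}}"
  define A1 where "A1 = (\<lambda>k. {1,k}) ` {4..n}"
  define A2 where "A2 = (\<lambda>k. {2,k}) ` {4..n}"
  define A3 where "A3 = (\<lambda>k. {3,k}) ` {4..n}"
  define A4 where "A4 = (\<lambda>k. {k, Suc k}) ` {4..<n}"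
  have c12: "face_contact (hcube (r 1) (p 1)) (hcube (r 2) (p 2))"
    using r1p r12 by (intro cube_contact1) (auto simp: pc X_def Y_def Z_def)
  have c23: "face_contact (hcube (r 2) (p 2)) (hcube (r 3) (p 3))"
    using r1p r12 cle[of 2] cpos n4 by (intro cube_contact3) (auto simp: pc X_def Y_def Z_def)
  have ck1: "face_contact (hcube (r 1) (p 1)) (hcube (r k) (p k))" if "4 \<le> k" "k \<le> n" for k
    using r1p r12 cle[of k] cpos rpos[of k] Sb[of k] S0[of k] rk3[of k] that
    by (intro cube_contact3) (auto simp: pc X_def Y_def Z_def)
  have ck2: "face_contact (hcube (r 2) (p 2)) (hcube (r k) (p k))" if "4 \<le> k" "k \<le> n" for k
    using r1p r12 cle[of k] cpos rpos[of k] Sb[of k] S0[of k] rk3[of k] that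
    by (intro cube_contact3) (auto simp: pc X_def Y_def Z_def)
  have ck3: "face_contact (hcube (r 3) (p 3)) (hcube (r k) (p k))" if "4 \<le> k" "k \<le> n" for k
    using r1p r12 cle[of k] cpos rpos[of k] Sb[of k] S0[of k] rk3[of k] that
    by (intro cube_contact1) (auto simp: pc X_def Y_def Z_def)
  have ck4: "face_contact (hcube (r k) (p k)) (hcube (r (Suc k)) (p (Suc k)))" if "4 \<le> k" "k < n" for k
    using cle[of k] cle[of "Suc k"] cpos rpos[of k] rpos[of "Suc k"] Ssuc[of k] assms(2)[of k "Suc k"] that
    by (intro cube_contact2) (auto simp: pc X_def Y_def Z_def)
  have sub: "A0 \<union> A1 \<union> A2 \<union> A3 \<union> A4 \<subseteq> face_contacts n r p"
  proof -
    have "A0 \<subseteq> face_contacts n r p" unfolding A0_def using n4 mem[OF _ _ _ c12] mem[OF _ _ _ c23] by auto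
    moreover have "A1 \<subseteq> face_contacts n r p" unfolding A1_def
    proof
      fix x assume "x \<in> (\<lambda>k. {1,k}) ` {4..n}"
      then obtain k where "x = {1,k}" "4 \<le> k" "k \<le> n" by auto
      then show "x \<in> face_contacts n r p" using mem[OF _ _ _ ck1[of k]] by auto
    qed
    moreover have "A2 \<subseteq> face_contacts n r p" unfolding A2_def
    proof
      fix x assume "x \<in> (\<lambda>k. {2,k}) ` {4..n}"
      then obtain k where "x = {2,k}" "4 \<le> k" "k \<le> n" by auto
      then show "x \<in> face_contacts n r p" using mem[OF _ _ _ ck2[of k]] by auto
    qed
    moreover have "A3 \<subseteq> face_contacts n r p" unfolding A3_def
    proof
      fix x assume "x \<in> (\<lambda>k. {3,k}) ` {4..n}"
      then obtain k where "x = {3,k}" "4 \<le> k" "k \<le> n" by auto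
      then show "x \<in> face_contacts n r p" using mem[OF _ _ _ ck3[of k]] by auto
    qed
    moreover have "A4 \<subseteq> face_contacts n r p" unfolding A4_def
    proof
      fix x assume "x \<in> (\<lambda>k. {k, Suc k}) ` {4..<n}"
      then obtain k where "x = {k, Suc k}" "4 \<le> k" "k < n" by auto
      then show "x \<in> face_contacts n r p" using mem[OF _ _ _ ck4[of k]] by auto
    qed
    ultimately show ?thesis by blast
  qed
  have cA0: "card A0 = 2" unfolding A0_def by (simp add: doubleton_eq_iff)
  have "inj_on (\<lambda>k. {1::nat,k}) {4..n}"
  proof (rule inj_onI)
    fix x y :: nat assume "x \<in> {4..n}" "y \<in> {4..n}" "{1,x} = {1,y}"
    then have "x \<in> {1,y}" by blast
    then show "x = y" using \<open>x \<in> {4..n}\<close> by auto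
  qed
  then have cA1: "card A1 = n - 3" unfolding A1_def by (simp add: card_image)
  have "inj_on (\<lambda>k. {2::nat,k}) {4..n}"
  proof (rule inj_onI)
    fix x y :: nat assume "x \<in> {4..n}" "y \<in> {4..n}" "{2,x} = {2,y}"
    then have "x \<in> {2,y}" by blast
    then show "x = y" using \<open>x \<in> {4..n}\<close> by auto
  qed
  then have cA2: "card A2 = n - 3" unfolding A2_def by (simp add: card_image)
  have "inj_on (\<lambda>k. {3::nat,k}) {4..n}"
  proof (rule inj_onI)
    fix x y :: nat assume "x \<in> {4..n}" "y \<in> {4..n}" "{3,x} = {3,y}"
    then have "x \<in> {3,y}" by blast
    then show "x = y" using \<open>x \<in> {4..n}\<close> by auto
  qed
  then have cA3: "card A3 = n - 3" unfolding A3_def by (simp add: card_image)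
  have "inj_on (\<lambda>k. {k::nat, Suc k}) {4..<n}"
  proof (rule inj_onI)
    fix x y :: nat assume "{x, Suc x} = {y, Suc y}"
    then have "x \<in> {y, Suc y}" "y \<in> {x, Suc x}" by blast+
    then show "x = y" by auto
  qed
  then have cA4: "card A4 = n - 4" unfolding A4_def by (simp add: card_image)
  have fins: "finite A0" "finite A1" "finite A2" "finite A3" "finite A4"
    unfolding A0_def A1_def A2_def A3_def A4_def by auto
  have m0: "X \<in> A0 \<Longrightarrow> 2 \<in> X \<and> (1 \<in> X \<or> 3 \<in> X)" for X unfolding A0_def by auto
  have m1: "X \<in> A1 \<Longrightarrow> 1 \<in> X \<and> 2 \<notin> X \<and> 3 \<notin> X" for X unfolding A1_def by auto
  have m2: "X \<in> A2 \<Longrightarrow> 2 \<in> X \<and> 1 \<notin> X \<and> 3 \<notin> X" for X unfolding A2_def by auto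
  have m3: "X \<in> A3 \<Longrightarrow> 3 \<in> X \<and> 1 \<notin> X \<and> 2 \<notin> X" for X unfolding A3_def by auto
  have m4: "X \<in> A4 \<Longrightarrow> 1 \<notin> X \<and> 2 \<notin> X \<and> 3 \<notin> X" for X unfolding A4_def by auto
  have d1: "A0 \<inter> A1 = {}" using m0 m1 by blast
  have d2: "(A0 \<union> A1) \<inter> A2 = {}" using m0 m1 m2 by blast
  have d3: "(A0 \<union> A1 \<union> A2) \<inter> A3 = {}" using m0 m1 m2 m3 by blast
  have d4: "(A0 \<union> A1 \<union> A2 \<union> A3) \<inter> A4 = {}" using m0 m1 m2 m3 m4 by blast
  have "card (A0 \<union> A1 \<union> A2 \<union> A3 \<union> A4) = 2 + (n-3) + (n-3) + (n-3) + (n-4)"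
    using fins d1 d2 d3 d4 cA0 cA1 cA2 cA3 cA4 by (simp add: card_Un_disjoint)
  also have "\<dots> = 4 * n - 11" using n4 by simp
  finally have "card (face_contacts n r p) \<ge> 4 * n - 11"
    using card_mono[OF fin sub] by simp
  moreover have "n \<ge> 9 \<longrightarrow> 4 * n - 11 > 3 * n - 3" by arith
  ultimately show ?thesis using pack by (intro exI[of _ p]) auto
qed

end
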